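(* Let $d\ge2$, $N\ge2$, $s\in\{1,\dots,N-1\}$ and $\mathbf{p}=(p_1,\dots,p_d)$ a probability vector with all $p_i>0$. For the generalized Ehrenfest urn model with these parameters started with all balls in urn $i$ (state $N\mathbf{e}_i$), for any $c>0$, $$\chi_{N\mathbf{e}_i}^2(l)\le e^{e^{-c}}-1\quad\text{for } l\ge\frac{\log(N(1-p_i)/p_i)+c}{-2\log(1-s/N)},$$ $$\chi_{N\mathbf{e}_i}^2(l)\ge e^{c}\quad\text{for } l\le\frac{\log(N(1-p_i)/p_i)-c}{-2\log(1-s/N)}.$$
   Context: $\mathcal{X}_N^d=\{\mathbf{x}\in\mathbb{N}_0^d:\sum_ix_i=N\}$; $\mathbf{e}_i$ is the $i$-th unit vector; $\mathcal{M}(\mathbf{x}\mid N,\mathbf{p})=\frac{N!}{x_1!\cdots x_d!}\prod_ip_i^{x_i}$. Generalized Ehrenfest urn model: $N$ indistinguishable balls in $d$ urns; at each step choose $s$ of the $N$ balls uniformly at random (without replacement) and redistribute each independently into urn $j$ with probability $p_j$; the state is the vector of urn counts, a Markov chain $K$ on $\mathcal{X}_N^d$ with stationary distribution $\pi=\mathcal{M}(\cdot\mid N,\mathbf{p})$. Chi-square distance: $\chi_{\mathbf{x}}^2(l)=\sum_{\mathbf{y}}\frac{[K^l(\mathbf{x},\mathbf{y})-\pi(\mathbf{y})]^2}{\pi(\mathbf{y})}$. *)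

theory Defs
  imports Complex_Main
begin

text \<open>States: vectors of urn counts, represented as functions nat => nat indexed by
  the urns 0..d-1 (zero outside), with total count N.\<close>
definition ehr_states :: "nat \<Rightarrow> nat \<Rightarrow> (nat \<Rightarrow> nat) set" where
  "ehr_states d N = {x. (\<forall>j\<ge>d. x j = 0) \<and> (\<Sum>j<d. x j) = N}"

definition multinom :: "nat \<Rightarrow> nat \<Rightarrow> (nat \<Rightarrow> real) \<Rightarrow> (nat \<Rightarrow> nat) \<Rightarrow> real" where
  "multinom d N p x = fact N / (\<Prod>j<d. fact (x j)) * (\<Prod>j<d. p j ^ x j)"

text \<open>One-step transition probability K(x,y): choose s of the N balls uniformly without
  replacement (k j balls from urn j, multivariate hypergeometric), then put each chosen
  ball independently into urn j with probability p j (multinomial); the new state is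
  y = x - k + (y - x + k).\<close>
definition ehr_K :: "nat \<Rightarrow> nat \<Rightarrow> nat \<Rightarrow> (nat \<Rightarrow> real) \<Rightarrow> (nat \<Rightarrow> nat) \<Rightarrow> (nat \<Rightarrow> nat) \<Rightarrow> real" where
  "ehr_K d N s p x y =
     (\<Sum>k\<in>ehr_states d s.
        if (\<forall>j<d. k j \<le> x j \<and> x j \<le> y j + k j)
        then (\<Prod>j<d. real (x j choose k j)) / real (N choose s)
             * multinom d s p (\<lambda>j. y j + k j - x j)
        else 0)"

fun ehr_Kpow :: "nat \<Rightarrow> nat \<Rightarrow> nat \<Rightarrow> (nat \<Rightarrow> real) \<Rightarrow> nat \<Rightarrow> (nat \<Rightarrow> nat) \<Rightarrow> (nat \<Rightarrow> nat) \<Rightarrow> real" where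
  "ehr_Kpow d N s p 0 x y = (if x = y then 1 else 0)"
| "ehr_Kpow d N s p (Suc l) x y =
     (\<Sum>z\<in>ehr_states d N. ehr_Kpow d N s p l x z * ehr_K d N s p z y)"

definition ehr_chi2 :: "nat \<Rightarrow> nat \<Rightarrow> nat \<Rightarrow> (nat \<Rightarrow> real) \<Rightarrow> (nat \<Rightarrow> nat) \<Rightarrow> nat \<Rightarrow> real" where
  "ehr_chi2 d N s p x l =
     (\<Sum>y\<in>ehr_states d N. (ehr_Kpow d N s p l x y - multinom d N p y)^2 / multinom d N p y)"

end

theory Submission
  imports Defs "HOL-Computational_Algebra.Polynomial"
begin

definition st :: "nat set \<Rightarrow> nat \<Rightarrow> (nat \<Rightarrow> nat) set" where
  "st J n = {y. (\<forall>j. j \<notin> J \<longrightarrow> y j = 0) \<and> (\<Sum>j\<in>J. y j) = n}"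

lemma ehr_states_st: "ehr_states d N = st {..<d} N"
  unfolding ehr_states_def st_def by auto

lemma st_empty: "st {} n = (if n = 0 then {\<lambda>_. 0} else {})"
  unfolding st_def by auto

lemma st_insert:
  assumes "finite J" "x \<notin> J"
  shows "st (insert x J) n = (\<lambda>(b,y). y(x:=b)) ` (SIGMA b:{..n}. st J (n - b))"
proof (intro equalityI subsetI)
  fix y assume y: "y \<in> st (insert x J) n"
  have s: "y x + (\<Sum>j\<in>J. y j) = n" using y assms unfolding st_def by auto
  have "(\<Sum>j\<in>J. (y(x:=0)) j) = (\<Sum>j\<in>J. y j)" using assms by (intro sum.cong) auto
  hence "y(x:=0) \<in> st J (n - y x)" using y s unfolding st_def by auto
  moreover have "y = (y(x:=0))(x := y x)" by simp
  moreover have "y x \<le> n" using s by auto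
  ultimately have "(y x, y(x:=0)) \<in> (SIGMA b:{..n}. st J (n - b))" by auto
  moreover have "y = (\<lambda>(b,y). y(x:=b)) (y x, y(x:=0))" by simp
  ultimately show "y \<in> (\<lambda>(b,y). y(x:=b)) ` (SIGMA b:{..n}. st J (n - b))" by (rule rev_image_eqI)
next
  fix y assume "y \<in> (\<lambda>(b,y). y(x:=b)) ` (SIGMA b:{..n}. st J (n - b))"
  then obtain b y' where b: "b \<le> n" and y': "y' \<in> st J (n - b)" and yy: "y = y'(x:=b)" by auto
  have "(\<Sum>j\<in>J. y j) = (\<Sum>j\<in>J. y' j)" using assms yy by (intro sum.cong) auto
  thus "y \<in> st (insert x J) n" using y' b yy assms unfolding st_def by auto
qed

lemma st_insert_inj:
  assumes "x \<notin> J"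
  shows "inj_on (\<lambda>(b,y). y(x:=b)) (SIGMA b:{..n}. st J (n - b))"
proof (rule inj_onI, clarify)
  fix b y b' y' assume y: "y \<in> st J (n - b)" and y': "y' \<in> st J (n - b')"
    and e: "y(x := b) = y'(x := b')"
  have "b = b'" using fun_cong[OF e, of x] by simp
  moreover have "y = y'"
  proof
    fix j show "y j = y' j"
    proof (cases "j = x")
      case True thus ?thesis using y y' assms unfolding st_def by auto
    next
      case False thus ?thesis using fun_cong[OF e, of j] by simp
    qed
  qed
  ultimately show "b = b' \<and> y = y'" by simp
qed

lemma finite_st: "finite J \<Longrightarrow> finite (st J n)"
proof (induction J arbitrary: n rule: finite_induct)
  case empty thus ?case by (simp add: st_empty)
next
  case (insert x J) thus ?case by (simp add: st_insert)
qed

lemma sum_st_insert: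
  assumes "finite J" "x \<notin> J"
  shows "(\<Sum>y\<in>st (insert x J) n. F y) = (\<Sum>b\<le>n. \<Sum>y\<in>st J (n - b). F (y(x:=b)))"
proof -
  have "(\<Sum>y\<in>st (insert x J) n. F y) = (\<Sum>z\<in>(SIGMA b:{..n}. st J (n - b)). F ((\<lambda>(b,y). y(x:=b)) z))"
    unfolding st_insert[OF assms] using sum.reindex[OF st_insert_inj[OF assms(2)], of F] by (simp only: o_def)
  also have "\<dots> = (\<Sum>z\<in>(SIGMA b:{..n}. st J (n - b)). case z of (b,y) \<Rightarrow> F (y(x:=b)))"
    by (intro sum.cong refl) (auto split: prod.split)
  also have "\<dots> = (\<Sum>b\<le>n. \<Sum>y\<in>st J (n - b). F (y(x:=b)))"
    by (rule sum.Sigma[symmetric]) (auto simp: finite_st assms)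
  finally show ?thesis .
qed

lemma prod_upd_out: "x \<notin> J \<Longrightarrow> (\<Prod>j\<in>J. f ((y(x:=b)) j)) = (\<Prod>j\<in>J. f (y j))"
  by (intro prod.cong) auto

lemma prod_if_out: "x \<notin> J \<Longrightarrow> (\<Prod>j\<in>J. f (if j = x then b else y j)) = (\<Prod>j\<in>J. f (y j))"
  by (intro prod.cong) auto

lemma prod_insert_upd:
  assumes "finite J" "x \<notin> J"
  shows "(\<Prod>j\<in>insert x J. f j ((y(x:=b)) j)) = f x b * (\<Prod>j\<in>J. f j (y j))"
proof -
  have "(\<Prod>j\<in>J. f j ((y(x:=b)) j)) = (\<Prod>j\<in>J. f j (y j))"
    by (rule prod.cong) (use assms in auto)
  thus ?thesis using assms by (simp add: prod.insert)
qed

lemma st_out: "y \<in> st J n \<Longrightarrow> j \<notin> J \<Longrightarrow> y j = 0"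
  unfolding st_def by auto

lemma multinomial_st:
  fixes a :: "nat \<Rightarrow> real"
  assumes "finite J"
  shows "(\<Sum>y\<in>st J n. fact n / (\<Prod>j\<in>J. fact (y j)) * (\<Prod>j\<in>J. a j ^ y j)) = (\<Sum>j\<in>J. a j) ^ n"
  using assms
proof (induction J arbitrary: n rule: finite_induct)
  case empty thus ?case by (simp add: st_empty)
next
  case (insert x J)
  have eq: "fact n / (\<Prod>j\<in>insert x J. fact ((y(x:=b)) j)) * (\<Prod>j\<in>insert x J. a j ^ (y(x:=b)) j)
      = of_nat (n choose b) * a x ^ b * (fact (n - b) / (\<Prod>j\<in>J. fact (y j)) * (\<Prod>j\<in>J. a j ^ y j))"
    if "b \<le> n" for b y
  proof -
    have p1: "(\<Prod>j\<in>insert x J. fact ((y(x:=b)) j)) = fact b * (\<Prod>j\<in>J. fact (y j))"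
      using prod_insert_upd[OF insert(1,2), of "\<lambda>j k. fact k"] by simp
    have p2: "(\<Prod>j\<in>insert x J. a j ^ (y(x:=b)) j) = a x ^ b * (\<Prod>j\<in>J. a j ^ y j)"
      using prod_insert_upd[OF insert(1,2), of "\<lambda>j k. a j ^ k"] by simp
    have h: "(fact n::nat) = (n choose b) * fact b * fact (n - b)"
      using binomial_fact_lemma[OF that] by (simp add: mult_ac)
    have fn: "(fact n :: real) = of_nat (n choose b) * fact b * fact (n - b)"
    proof -
      have "real (fact n) = real ((n choose b) * fact b * fact (n - b))" using h by (rule arg_cong)
      thus ?thesis by (simp only: of_nat_fact of_nat_mult)
    qed
    have P: "(\<Prod>j\<in>J. fact (y j) :: real) \<noteq> 0" using insert.hyps(1) by (simp add: prod_zero_iff)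
    have fb: "(fact b :: real) \<noteq> 0" by simp
    show ?thesis unfolding p1 p2 fn using P fb by (simp add: divide_simps)
  qed
  have "(\<Sum>y\<in>st (insert x J) n. fact n / (\<Prod>j\<in>insert x J. fact (y j)) * (\<Prod>j\<in>insert x J. a j ^ y j))
     = (\<Sum>b\<le>n. \<Sum>y\<in>st J (n - b). of_nat (n choose b) * a x ^ b * (fact (n - b) / (\<Prod>j\<in>J. fact (y j)) * (\<Prod>j\<in>J. a j ^ y j)))"
    unfolding sum_st_insert[OF insert(1,2)] by (intro sum.cong refl eq) simp
  also have "\<dots> = (\<Sum>b\<le>n. of_nat (n choose b) * a x ^ b * (\<Sum>y\<in>st J (n - b). fact (n - b) / (\<Prod>j\<in>J. fact (y j)) * (\<Prod>j\<in>J. a j ^ y j)))"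
    by (simp only: sum_distrib_left)
  also have "\<dots> = (\<Sum>b\<le>n. of_nat (n choose b) * a x ^ b * (\<Sum>j\<in>J. a j) ^ (n - b))"
    by (simp only: insert.IH)
  also have "\<dots> = (a x + (\<Sum>j\<in>J. a j)) ^ n" by (rule binomial_ring[symmetric])
  finally show ?case using insert by simp
qed

lemma vandermonde_st:
  assumes "finite J"
  shows "(\<Sum>y\<in>st J n. \<Prod>j\<in>J. (z j choose y j)) = ((\<Sum>j\<in>J. z j) choose n)"
  using assms
proof (induction J arbitrary: n rule: finite_induct)
  case empty thus ?case by (simp add: st_empty)
next
  case (insert x J)
  have eq: "(\<Prod>j\<in>insert x J. (z j choose (y(x:=b)) j)) = (z x choose b) * (\<Prod>j\<in>J. (z j choose y j))"
    for b y using prod_insert_upd[OF insert(1,2), of "\<lambda>j k. z j choose k"] by simp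
  have "(\<Sum>y\<in>st (insert x J) n. \<Prod>j\<in>insert x J. (z j choose y j))
     = (\<Sum>b\<le>n. \<Sum>y\<in>st J (n - b). (z x choose b) * (\<Prod>j\<in>J. (z j choose y j)))"
    unfolding sum_st_insert[OF insert(1,2)] eq ..
  also have "\<dots> = (\<Sum>b\<le>n. (z x choose b) * ((\<Sum>j\<in>J. z j) choose (n - b)))"
    by (simp only: sum_distrib_left[symmetric] insert.IH)
  also have "\<dots> = (z x + (\<Sum>j\<in>J. z j)) choose n" by (rule vandermonde)
  finally show ?case using insert by simp
qed


lemma sum_sub_nat:
  fixes f g :: "nat \<Rightarrow> nat"
  assumes "finite A" "\<forall>x\<in>A. g x \<le> f x"
  shows "(\<Sum>x\<in>A. f x - g x) = (\<Sum>x\<in>A. f x) - (\<Sum>x\<in>A. g x)"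
  using assms by (simp add: sum_subtractf_nat)

lemma K_right:
  assumes z: "z \<in> st {..<d} N"
  shows "(\<Sum>y\<in>st {..<d} N. ehr_K d N s p z y * G y) =
    (\<Sum>m\<in>st {..<d} s. if (\<forall>j<d. m j \<le> z j)
       then (\<Prod>j<d. real (z j choose m j)) / real (N choose s) *
            (\<Sum>w\<in>st {..<d} s. multinom d s p w * G (\<lambda>j. z j - m j + w j))
       else 0)"
proof -
  have "(\<Sum>y\<in>st {..<d} N. ehr_K d N s p z y * G y) =
     (\<Sum>m\<in>st {..<d} s. \<Sum>y\<in>st {..<d} N. (if (\<forall>j<d. m j \<le> z j \<and> z j \<le> y j + m j)
        then (\<Prod>j<d. real (z j choose m j)) / real (N choose s)
             * multinom d s p (\<lambda>j. y j + m j - z j)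
        else 0) * G y)"
    unfolding ehr_K_def ehr_states_st sum_distrib_right by (rule sum.swap)
  also have "\<dots> = (\<Sum>m\<in>st {..<d} s. if (\<forall>j<d. m j \<le> z j)
       then (\<Prod>j<d. real (z j choose m j)) / real (N choose s) *
            (\<Sum>w\<in>st {..<d} s. multinom d s p w * G (\<lambda>j. z j - m j + w j))
       else 0)"
  proof (rule sum.cong[OF refl])
    fix m assume m: "m \<in> st {..<d} s"
    show "(\<Sum>y\<in>st {..<d} N. (if (\<forall>j<d. m j \<le> z j \<and> z j \<le> y j + m j)
        then (\<Prod>j<d. real (z j choose m j)) / real (N choose s)
             * multinom d s p (\<lambda>j. y j + m j - z j)
        else 0) * G y) = (if (\<forall>j<d. m j \<le> z j)
       then (\<Prod>j<d. real (z j choose m j)) / real (N choose s) *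
            (\<Sum>w\<in>st {..<d} s. multinom d s p w * G (\<lambda>j. z j - m j + w j))
       else 0)"
    proof (cases "\<forall>j<d. m j \<le> z j")
      case False
      have "(\<Sum>y\<in>st {..<d} N. (if (\<forall>j<d. m j \<le> z j \<and> z j \<le> y j + m j)
        then (\<Prod>j<d. real (z j choose m j)) / real (N choose s)
             * multinom d s p (\<lambda>j. y j + m j - z j)
        else 0) * G y) = 0" using False by (intro sum.neutral) auto
      thus ?thesis using False by (simp only: if_False)
    next
      case True
      define c where "c = (\<Prod>j<d. real (z j choose m j)) / real (N choose s)"
      have zs: "(\<Sum>j<d. z j) = N" and mz: "(\<Sum>j<d. m j) = s" using z m unfolding st_def by auto
      have z0: "\<And>j. j \<ge> d \<Longrightarrow> z j = 0" and m0: "\<And>j. j \<ge> d \<Longrightarrow> m j = 0"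
        using z m unfolding st_def by auto
      have sN: "s \<le> N" using True zs mz by (metis sum_mono lessThan_iff)
      have L: "(\<Sum>y\<in>st {..<d} N. (if (\<forall>j<d. m j \<le> z j \<and> z j \<le> y j + m j)
          then c * multinom d s p (\<lambda>j. y j + m j - z j) else 0) * G y)
        = (\<Sum>y\<in>{y\<in>st {..<d} N. \<forall>j<d. z j \<le> y j + m j}. c * multinom d s p (\<lambda>j. y j + m j - z j) * G y)"
        unfolding sum.inter_filter[OF finite_st[OF finite_lessThan]] using True by (intro sum.cong) auto
      also have "\<dots> = (\<Sum>w\<in>st {..<d} s. c * multinom d s p w * G (\<lambda>j. z j - m j + w j))"
      proof (rule sum.reindex_bij_witness[where i="\<lambda>w. (\<lambda>j. z j - m j + w j)" and j="\<lambda>y. (\<lambda>j. y j + m j - z j)"])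
        fix w assume w: "w \<in> st {..<d} s"
        have w0: "\<And>j. j \<ge> d \<Longrightarrow> w j = 0" and ws: "(\<Sum>j<d. w j) = s" using w unfolding st_def by auto
        show "(\<lambda>j. (z j - m j + w j) + m j - z j) = w"
        proof
          fix j show "z j - m j + w j + m j - z j = w j"
            using True z0[of j] m0[of j] by (cases "j < d") auto
        qed
        have "(\<Sum>j<d. z j - m j + w j) = (\<Sum>j<d. z j - m j) + s" by (simp add: sum.distrib ws)
        also have "(\<Sum>j<d. z j - m j) = N - s" using True zs mz by (subst sum_sub_nat) auto
        finally have "(\<Sum>j<d. z j - m j + w j) = N" using sN by simp
        thus "(\<lambda>j. z j - m j + w j) \<in> {y\<in>st {..<d} N. \<forall>j<d. z j \<le> y j + m j}"
          using True z0 m0 w0 unfolding st_def by auto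
      next
        fix y assume y: "y \<in> {y\<in>st {..<d} N. \<forall>j<d. z j \<le> y j + m j}"
        have y0: "\<And>j. j \<ge> d \<Longrightarrow> y j = 0" and ys: "(\<Sum>j<d. y j) = N" and yz: "\<forall>j<d. z j \<le> y j + m j"
          using y unfolding st_def by auto
        show "(\<lambda>j. z j - m j + (y j + m j - z j)) = y"
        proof
          fix j show "z j - m j + (y j + m j - z j) = y j"
            using True yz z0[of j] m0[of j] y0[of j] by (cases "j < d") auto
        qed
        have "(\<Sum>j<d. y j + m j - z j) = (\<Sum>j<d. y j + m j) - N" using yz zs by (subst sum_sub_nat) auto
        also have "\<dots> = s" using ys mz by (simp add: sum.distrib)
        finally show "(\<lambda>j. y j + m j - z j) \<in> st {..<d} s"
          using y0 m0 z0 unfolding st_def by auto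
      next
        fix y show "y \<in> {y\<in>st {..<d} N. \<forall>j<d. z j \<le> y j + m j} \<Longrightarrow> c * multinom d s p (\<lambda>j. y j + m j - z j) * G (\<lambda>j. z j - m j + (y j + m j - z j)) = c * multinom d s p (\<lambda>j. y j + m j - z j) * G y"
        proof -
          assume y: "y \<in> {y\<in>st {..<d} N. \<forall>j<d. z j \<le> y j + m j}"
          have y0: "\<And>j. j \<ge> d \<Longrightarrow> y j = 0" and yz: "\<forall>j<d. z j \<le> y j + m j"
            using y unfolding st_def by auto
          have "(\<lambda>j. z j - m j + (y j + m j - z j)) = y"
          proof
            fix j show "z j - m j + (y j + m j - z j) = y j"
              using True yz z0[of j] m0[of j] y0[of j] by (cases "j < d") auto
          qed
          thus ?thesis by simp
        qed
      qed
      finally show ?thesis using True unfolding c_def by (simp add: sum_distrib_left mult.assoc)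
    qed
  qed
  finally show ?thesis .
qed


lemma coeff_lin_pow: "coeff ([:1, c:] ^ k) j = of_nat (k choose j) * (c::'a::comm_ring_1) ^ j"
proof (induction k arbitrary: j)
  case 0 thus ?case by (cases j) auto
next
  case (Suc k)
  have e: "[:1, c:] ^ Suc k = [:1,c:] ^ k + pCons 0 (smult c ([:1,c:] ^ k))"
    by (simp add: mult_pCons_left)
  show ?case
  proof (cases j)
    case 0 thus ?thesis unfolding e using Suc by simp
  next
    case (Suc j') thus ?thesis unfolding e using Suc.IH by (simp add: algebra_simps)
  qed
qed

lemma coeff_XY: "coeff ([:1, c:] ^ A * [:1, e:] ^ B) n =
   (\<Sum>j\<le>n. of_nat (A choose j) * c ^ j * (of_nat (B choose (n - j)) * (e::'a::comm_ring_1) ^ (n - j)))"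
  by (simp add: coeff_mult coeff_lin_pow)

lemma P1:
  fixes pp qq :: real
  assumes "pp + qq = 1" "a \<le> u" "a \<le> s" "s - a \<le> N - u" "u \<le> N"
  shows "(\<Sum>b\<le>s. of_nat (s choose b) * pp ^ b * qq ^ (s - b) *
            coeff ([:1,qq:] ^ (u - a + b) * [:1,-pp:] ^ (N - (u - a + b))) n)
       = coeff ([:1,qq:] ^ (u - a) * [:1,-pp:] ^ (N - u - (s - a))) n"
proof -
  define X where "X = [:1,qq:]"
  define Y where "Y = [:1,-pp:]"
  define R where "R = X ^ (u - a) * Y ^ (N - u - (s - a))"
  have one: "smult pp X + smult qq Y = 1"
    unfolding X_def Y_def using assms(1) by (simp add: one_pCons algebra_simps)
  have "R = R * (smult pp X + smult qq Y) ^ s" by (simp add: one)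
  also have "\<dots> = (\<Sum>b\<le>s. smult (of_nat (s choose b) * pp ^ b * qq ^ (s - b))
                    (X ^ (u - a + b) * Y ^ (N - (u - a + b))))"
  proof -
    have "R * (smult pp X + smult qq Y) ^ s =
       (\<Sum>b\<le>s. R * (of_nat (s choose b) * (smult pp X) ^ b * (smult qq Y) ^ (s - b)))"
      by (simp add: binomial_ring sum_distrib_left)
    also have "\<dots> = (\<Sum>b\<le>s. smult (of_nat (s choose b) * pp ^ b * qq ^ (s - b))
                    (X ^ (u - a + b) * Y ^ (N - (u - a + b))))"
    proof (rule sum.cong[OF refl])
      fix b assume b: "b \<in> {..s}"
      have e1: "u - a + b = (u - a) + b" by simp
      have e2: "N - (u - a + b) = (N - u - (s - a)) + (s - b)" using assms b by auto
      show "R * (of_nat (s choose b) * (smult pp X) ^ b * (smult qq Y) ^ (s - b)) =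
            smult (of_nat (s choose b) * pp ^ b * qq ^ (s - b)) (X ^ (u - a + b) * Y ^ (N - (u - a + b)))"
        unfolding R_def e2 power_add smult_power of_nat_poly
        by (simp add: algebra_simps smult_power)
    qed
    finally show ?thesis .
  qed
  finally have "R = (\<Sum>b\<le>s. smult (of_nat (s choose b) * pp ^ b * qq ^ (s - b))
                    (X ^ (u - a + b) * Y ^ (N - (u - a + b))))" .
  hence "coeff R n = (\<Sum>b\<le>s. of_nat (s choose b) * pp ^ b * qq ^ (s - b) *
                    coeff (X ^ (u - a + b) * Y ^ (N - (u - a + b))) n)"
    by (simp add: coeff_sum)
  thus ?thesis unfolding R_def X_def Y_def by simp
qed

lemma choose_swap: "(u choose a) * ((u - a) choose j) = (u choose j) * ((u - j) choose a)"
proof (cases "a + j \<le> u")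
  case True
  have 1: "(u choose (a + j)) * ((a + j) choose a) = (u choose a) * ((u - a) choose j)"
    using choose_mult[of a "a+j" u] True by simp
  have 2: "(u choose (a + j)) * ((a + j) choose j) = (u choose j) * ((u - j) choose a)"
    using choose_mult[of j "a+j" u] True by simp
  have "(a + j) choose a = (a + j) choose j"
    using binomial_symmetric[of a "a+j"] by simp
  thus ?thesis using 1 2 by metis
next
  case False
  have "(u choose a) * ((u - a) choose j) = 0"
  proof (cases "a \<le> u")
    case True thus ?thesis using False binomial_eq_0[of "u - a" j] by simp
  next
    case F: False thus ?thesis using binomial_eq_0[of u a] by simp
  qed
  moreover have "(u choose j) * ((u - j) choose a) = 0"
  proof (cases "j \<le> u")
    case True thus ?thesis using False binomial_eq_0[of "u - j" a] by simp
  next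
    case F: False thus ?thesis using binomial_eq_0[of u j] by simp
  qed
  ultimately show ?thesis by (simp only:)
qed

lemma P2nat:
  assumes "u \<le> N" "j \<le> n"
  shows "(\<Sum>a\<le>s. (u choose a) * ((u - a) choose j) * (((N - u) choose (s - a)) * ((N - u - (s - a)) choose (n - j))))
     = (u choose j) * ((N - u) choose (n - j)) * ((N - n) choose s)"
proof -
  define M where "M = N - u"
  have "(\<Sum>a\<le>s. (u choose a) * ((u - a) choose j) * ((M choose (s - a)) * ((M - (s - a)) choose (n - j))))
      = (\<Sum>a\<le>s. (u choose j) * (M choose (n - j)) * (((u - j) choose a) * ((M - (n - j)) choose (s - a))))"
    apply (intro sum.cong refl)
    subgoal for a unfolding choose_swap[of u a j] choose_swap[of M "s - a" "n - j"] by (simp only: mult_ac)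
    done
  also have "\<dots> = (u choose j) * (M choose (n - j)) * ((u - j + (M - (n - j))) choose s)"
    by (simp add: sum_distrib_left[symmetric] vandermonde)
  also have "\<dots> = (u choose j) * (M choose (n - j)) * ((N - n) choose s)"
  proof (cases "j \<le> u \<and> n - j \<le> M")
    case True
    hence "u - j + (M - (n - j)) = N - n" using assms unfolding M_def by auto
    thus ?thesis by simp
  next
    case False thus ?thesis by auto
  qed
  finally show ?thesis unfolding M_def .
qed

lemma P2:
  fixes pp qq :: real
  assumes "u \<le> N"
  shows "(\<Sum>a\<le>s. of_nat (u choose a) * of_nat ((N - u) choose (s - a)) *
            coeff ([:1,qq:] ^ (u - a) * [:1,-pp:] ^ (N - u - (s - a))) n)
       = of_nat ((N - n) choose s) * coeff ([:1,qq:] ^ u * [:1,-pp:] ^ (N - u)) n"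
proof -
  have "(\<Sum>a\<le>s. of_nat (u choose a) * of_nat ((N - u) choose (s - a)) *
            coeff ([:1,qq:] ^ (u - a) * [:1,-pp:] ^ (N - u - (s - a))) n)
     = (\<Sum>j\<le>n. qq ^ j * (-pp) ^ (n - j) * of_nat (\<Sum>a\<le>s. (u choose a) * ((u - a) choose j) *
           (((N - u) choose (s - a)) * ((N - u - (s - a)) choose (n - j)))))"
    unfolding coeff_XY by (simp add: sum_distrib_left sum_distrib_right mult_ac sum.swap[of _ "{..s}"])
  also have "\<dots> = (\<Sum>j\<le>n. qq ^ j * (-pp) ^ (n - j) * of_nat ((u choose j) * ((N - u) choose (n - j)) * ((N - n) choose s)))"
    by (intro sum.cong refl) (simp only: P2nat[OF assms] atMost_iff)
  also have "\<dots> = of_nat ((N - n) choose s) * coeff ([:1,qq:] ^ u * [:1,-pp:] ^ (N - u)) n"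
    unfolding coeff_XY by (simp add: sum_distrib_left mult_ac)
  finally show ?thesis .
qed


lemma mn_split:
  fixes a :: "nat \<Rightarrow> real"
  assumes "finite J" "x \<notin> J" "b \<le> n"
  shows "fact n / (\<Prod>j\<in>insert x J. fact ((y(x:=b)) j)) * (\<Prod>j\<in>insert x J. a j ^ (y(x:=b)) j)
      = of_nat (n choose b) * a x ^ b * (fact (n - b) / (\<Prod>j\<in>J. fact (y j)) * (\<Prod>j\<in>J. a j ^ y j))"
proof -
  have p1: "(\<Prod>j\<in>insert x J. fact ((y(x:=b)) j)) = fact b * (\<Prod>j\<in>J. fact (y j))"
    using prod_insert_upd[OF assms(1,2), of "\<lambda>j k. fact k"] by simp
  have p2: "(\<Prod>j\<in>insert x J. a j ^ (y(x:=b)) j) = a x ^ b * (\<Prod>j\<in>J. a j ^ y j)"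
    using prod_insert_upd[OF assms(1,2), of "\<lambda>j k. a j ^ k"] by simp
  have h: "(fact n::nat) = (n choose b) * fact b * fact (n - b)"
    using binomial_fact_lemma[OF assms(3)] by (simp add: mult_ac)
  have fn: "(fact n :: real) = of_nat (n choose b) * fact b * fact (n - b)"
  proof -
    have "real (fact n) = real ((n choose b) * fact b * fact (n - b))" using h by (rule arg_cong)
    thus ?thesis by (simp only: of_nat_fact of_nat_mult)
  qed
  have P: "(\<Prod>j\<in>J. fact (y j) :: real) \<noteq> 0" using assms(1) by (simp add: prod_zero_iff)
  have fb: "(fact b :: real) \<noteq> 0" by simp
  show ?thesis unfolding p1 p2 fn using P fb by (simp add: divide_simps)
qed

context
  fixes d N s i :: nat and p :: "nat \<Rightarrow> real"
  assumes i: "i < d" and psum: "(\<Sum>j<d. p j) = 1" and sN: "s \<le> N"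
begin

lemma dec: "{..<d} = insert i ({..<d} - {i})" using i by auto

lemma sumJ: "(\<Sum>j\<in>{..<d} - {i}. f j) = (\<Sum>j<d. f j) - (f j :: 'a::ab_group_add)" if "j = i" for f j
  using i that by (simp add: sum_diff1)

lemma sumJ_nat: "(\<Sum>j<d. f j) = f i + (\<Sum>j\<in>{..<d} - {i}. f j :: nat)"
  using i by (simp add: sum.remove)

lemma marg_mult:
  "(\<Sum>w\<in>st {..<d} s'. multinom d s' p w * g (w i)) =
   (\<Sum>b\<le>s'. of_nat (s' choose b) * p i ^ b * (1 - p i) ^ (s' - b) * g b)"
proof -
  let ?J = "{..<d} - {i}"
  have fJ: "finite ?J" and iJ: "i \<notin> ?J" by auto
  have "(\<Sum>w\<in>st {..<d} s'. multinom d s' p w * g (w i)) =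
    (\<Sum>w\<in>st (insert i ?J) s'. fact s' / (\<Prod>j\<in>insert i ?J. fact (w j)) * (\<Prod>j\<in>insert i ?J. p j ^ w j) * g (w i))"
    unfolding multinom_def by (simp only: dec[symmetric])
  also have "\<dots> = (\<Sum>b\<le>s'. \<Sum>w\<in>st ?J (s' - b). of_nat (s' choose b) * p i ^ b * g b *
        (fact (s' - b) / (\<Prod>j\<in>?J. fact (w j)) * (\<Prod>j\<in>?J. p j ^ w j)))"
    unfolding sum_st_insert[OF fJ iJ]
    apply (intro sum.cong refl)
    subgoal for b w using mn_split[OF fJ iJ, of b s' w p] by simp
    done
  also have "\<dots> = (\<Sum>b\<le>s'. of_nat (s' choose b) * p i ^ b * g b * (\<Sum>j\<in>?J. p j) ^ (s' - b))"
    by (simp only: sum_distrib_left[symmetric] multinomial_st[OF fJ])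
  also have "\<dots> = (\<Sum>b\<le>s'. of_nat (s' choose b) * p i ^ b * (1 - p i) ^ (s' - b) * g b)"
    using sumJ[of i p] psum by (simp add: mult_ac)
  finally show ?thesis .
qed

lemma marg_hyp:
  "(\<Sum>m\<in>st {..<d} s'. (\<Prod>j<d. real (z j choose m j)) * h (m i)) =
   (\<Sum>a\<le>s'. of_nat (z i choose a) * of_nat ((\<Sum>j\<in>{..<d} - {i}. z j) choose (s' - a)) * h a)"
proof -
  let ?J = "{..<d} - {i}"
  have fJ: "finite ?J" and iJ: "i \<notin> ?J" by auto
  have "(\<Sum>m\<in>st {..<d} s'. (\<Prod>j<d. real (z j choose m j)) * h (m i)) =
     (\<Sum>m\<in>st (insert i ?J) s'. (\<Prod>j\<in>insert i ?J. real (z j choose m j)) * h (m i))"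
    by (simp only: dec[symmetric])
  also have "\<dots> = (\<Sum>a\<le>s'. \<Sum>m\<in>st ?J (s' - a). of_nat (z i choose a) * h a * real (\<Prod>j\<in>?J. (z j choose m j)))"
    unfolding sum_st_insert[OF fJ iJ]
    apply (intro sum.cong refl)
    subgoal for a m using prod_insert_upd[OF fJ iJ, of "\<lambda>j k. real (z j choose k)" m a] by simp
    done
  also have "\<dots> = (\<Sum>a\<le>s'. of_nat (z i choose a) * h a * real (\<Sum>m\<in>st ?J (s' - a). (\<Prod>j\<in>?J. (z j choose m j))))"
    by (simp only: sum_distrib_left[symmetric] of_nat_sum)
  also have "\<dots> = (\<Sum>a\<le>s'. of_nat (z i choose a) * of_nat ((\<Sum>j\<in>?J. z j) choose (s' - a)) * h a)"
    by (simp only: vandermonde_st[OF fJ] mult_ac)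
  finally show ?thesis .
qed

end


definition psi :: "nat \<Rightarrow> real \<Rightarrow> nat \<Rightarrow> nat \<Rightarrow> real" where
  "psi N pp n u = coeff ([:1, 1 - pp:] ^ u * [:1, -pp:] ^ (N - u)) n"

definition beta :: "nat \<Rightarrow> nat \<Rightarrow> nat \<Rightarrow> real" where
  "beta N s n = real ((N - n) choose s) / real (N choose s)"

context
  fixes d N s i :: nat and p :: "nat \<Rightarrow> real"
  assumes i: "i < d" and psum: "(\<Sum>j<d. p j) = 1" and sN: "s \<le> N"
begin

lemma eigen:
  assumes z: "z \<in> st {..<d} N"
  shows "(\<Sum>y\<in>st {..<d} N. ehr_K d N s p z y * psi N (p i) n (y i)) = beta N s n * psi N (p i) n (z i)"
proof -
  define u where "u = z i"
  define phi where "phi a = coeff ([:1, 1 - p i:] ^ (u - a) * [:1, - p i:] ^ (N - u - (s - a))) n" for a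
  let ?J = "{..<d} - {i}"
  have sJ: "\<And>f::nat\<Rightarrow>nat. (\<Sum>j<d. f j) = f i + (\<Sum>j\<in>?J. f j)" using i by (simp add: sum.remove)
  have zs: "(\<Sum>j<d. z j) = N" using z unfolding st_def by auto
  have zJ: "(\<Sum>j\<in>?J. z j) = N - u" using sJ[of z] zs unfolding u_def by simp
  have uN: "u \<le> N" using sJ[of z] zs unfolding u_def by simp
  have inner: "(\<Sum>w\<in>st {..<d} s. multinom d s p w * psi N (p i) n (z i - m i + w i)) = phi (m i)"
    if m: "m \<in> st {..<d} s" and mz: "\<forall>j<d. m j \<le> z j" for m
  proof -
    have ms: "(\<Sum>j<d. m j) = s" using m unfolding st_def by auto
    have a1: "m i \<le> u" using mz i unfolding u_def by auto
    have a2: "m i \<le> s" using sJ[of m] ms by simp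
    have "(\<Sum>j\<in>?J. m j) \<le> (\<Sum>j\<in>?J. z j)" using mz by (intro sum_mono) auto
    hence a3: "s - m i \<le> N - u" using sJ[of m] ms zJ by simp
    have "(\<Sum>w\<in>st {..<d} s. multinom d s p w * psi N (p i) n (z i - m i + w i))
        = (\<Sum>b\<le>s. of_nat (s choose b) * p i ^ b * (1 - p i) ^ (s - b) * psi N (p i) n (u - m i + b))"
      using marg_mult[OF i psum sN, of s "\<lambda>b. psi N (p i) n (z i - m i + b)"] unfolding u_def by simp
    also have "\<dots> = phi (m i)"
      unfolding psi_def phi_def using P1[of "p i" "1 - p i" "m i" u s N n] a1 a2 a3 uN by simp
    finally show ?thesis .
  qed
  have "(\<Sum>y\<in>st {..<d} N. ehr_K d N s p z y * psi N (p i) n (y i)) =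
    (\<Sum>m\<in>st {..<d} s. if (\<forall>j<d. m j \<le> z j)
       then (\<Prod>j<d. real (z j choose m j)) / real (N choose s) *
            (\<Sum>w\<in>st {..<d} s. multinom d s p w * psi N (p i) n (z i - m i + w i))
       else 0)"
    using K_right[OF z, where G="\<lambda>y. psi N (p i) n (y i)" and s=s and p=p] by simp
  also have "\<dots> = (\<Sum>m\<in>st {..<d} s. if (\<forall>j<d. m j \<le> z j)
       then (\<Prod>j<d. real (z j choose m j)) / real (N choose s) * phi (m i) else 0)"
    by (intro sum.cong refl) (auto simp: inner)
  also have "\<dots> = (\<Sum>m\<in>st {..<d} s. (\<Prod>j<d. real (z j choose m j)) * phi (m i)) / real (N choose s)"
    unfolding sum_divide_distrib
  proof (intro sum.cong refl)
    fix m assume "m \<in> st {..<d} s"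
    show "(if (\<forall>j<d. m j \<le> z j)
       then (\<Prod>j<d. real (z j choose m j)) / real (N choose s) * phi (m i) else 0) =
       (\<Prod>j<d. real (z j choose m j)) * phi (m i) / real (N choose s)"
    proof (cases "\<forall>j<d. m j \<le> z j")
      case True thus ?thesis by simp
    next
      case False
      then obtain j where "j < d" "z j < m j" by auto
      hence "(\<Prod>j<d. real (z j choose m j)) = 0" by (subst prod_zero_iff) auto
      thus ?thesis using False by simp
    qed
  qed
  also have "\<dots> = (\<Sum>a\<le>s. of_nat (u choose a) * of_nat ((N - u) choose (s - a)) * phi a) / real (N choose s)"
    using marg_hyp[OF i psum sN, where s'=s and z=z and h=phi] zJ unfolding u_def by simp
  also have "\<dots> = beta N s n * psi N (p i) n (z i)"
    unfolding phi_def beta_def psi_def u_def[symmetric] P2[OF uN, where s=s and qq="1 - p i" and pp="p i" and n=n]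
    by simp
  finally show ?thesis .
qed

end

lemma coord_sym:
  fixes pp :: real
  assumes "m \<le> z" "m' \<le> y" "z - m = y - m'"
  shows "pp ^ z / fact z * real (z choose m) * (pp ^ m' / fact m') = pp ^ y / fact y * real (y choose m') * (pp ^ m / fact m)"
proof -
  define w where "w = z - m"
  have z: "z = w + m" and y: "y = w + m'" using assms unfolding w_def by auto
  have c1: "real (z choose m) = fact z / (fact m * fact w)"
    using binomial_fact[OF assms(1)] unfolding w_def by simp
  have c2: "real (y choose m') = fact y / (fact m' * fact w)"
    using binomial_fact[OF assms(2)] assms(3) unfolding w_def by simp
  have "pp ^ z / fact z * real (z choose m) * (pp ^ m' / fact m') = pp ^ z / fact z * (fact z / (fact m * fact w)) * (pp ^ m' / fact m')"
    by (simp only: c1)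
  also have "\<dots> = pp ^ (w + m + m') / (fact m * fact w * fact m')"
    unfolding z by (simp add: power_add field_simps)
  also have "\<dots> = pp ^ y / fact y * (fact y / (fact m' * fact w)) * (pp ^ m / fact m)"
    unfolding y by (simp add: power_add field_simps)
  also have "\<dots> = pp ^ y / fact y * real (y choose m') * (pp ^ m / fact m)"
    by (simp only: c2)
  finally show ?thesis .
qed

lemma multinom_prod: "multinom d N p x = fact N * (\<Prod>j<d. p j ^ x j / fact (x j))"
  unfolding multinom_def by (simp add: prod_dividef prod.distrib)

lemma K_rev:
  assumes z: "z \<in> st {..<d} N" and y: "y \<in> st {..<d} N"
  shows "multinom d N p z * ehr_K d N s p z y = multinom d N p y * ehr_K d N s p y z"
proof -
  have z0: "\<And>j. j \<ge> d \<Longrightarrow> z j = 0" and zs: "(\<Sum>j<d. z j) = N" using z unfolding st_def by auto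
  have y0: "\<And>j. j \<ge> d \<Longrightarrow> y j = 0" and ys: "(\<Sum>j<d. y j) = N" using y unfolding st_def by auto
  define P where "P z y m = (\<forall>j<d. m j \<le> z j \<and> z j \<le> y j + m j)" for z y :: "nat \<Rightarrow> nat" and m
  define T where "T z y m = multinom d N p z * ((\<Prod>j<d. real (z j choose m j)) / real (N choose s)
             * multinom d s p (\<lambda>j. y j + m j - z j))" for z y :: "nat \<Rightarrow> nat" and m
  have eK: "multinom d N p a * ehr_K d N s p a b = (\<Sum>m\<in>{m\<in>st {..<d} s. P a b m}. T a b m)" for a b
    unfolding ehr_K_def ehr_states_st sum_distrib_left T_def P_def sum.inter_filter[OF finite_st[OF finite_lessThan]]
    by (intro sum.cong refl) auto
  have "(\<Sum>m\<in>{m\<in>st {..<d} s. P z y m}. T z y m) = (\<Sum>m\<in>{m\<in>st {..<d} s. P y z m}. T y z m)"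
  proof (rule sum.reindex_bij_witness[where i="\<lambda>m. (\<lambda>j. z j + m j - y j)" and j="\<lambda>m. (\<lambda>j. y j + m j - z j)"])
    fix m assume m: "m \<in> {m\<in>st {..<d} s. P z y m}"
    have m0: "\<And>j. j \<ge> d \<Longrightarrow> m j = 0" and ms: "(\<Sum>j<d. m j) = s" and P: "P z y m" using m unfolding st_def by auto
    show "(\<lambda>j. z j + (y j + m j - z j) - y j) = m"
    proof
      fix j show "z j + (y j + m j - z j) - y j = m j" using P z0[of j] y0[of j] m0[of j] unfolding P_def by (cases "j < d") auto
    qed
    have "(\<Sum>j<d. y j + m j - z j) = (\<Sum>j<d. y j + m j) - N" using P zs unfolding P_def by (subst sum_sub_nat) auto
    also have "\<dots> = s" using ys ms by (simp add: sum.distrib)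
    finally show "(\<lambda>j. y j + m j - z j) \<in> {m\<in>st {..<d} s. P y z m}"
      using P z0 y0 m0 unfolding st_def P_def by auto
    have "multinom d N p z * (\<Prod>j<d. real (z j choose m j)) * multinom d s p (\<lambda>j. y j + m j - z j)
       = multinom d N p y * (\<Prod>j<d. real (y j choose (y j + m j - z j))) * multinom d s p (\<lambda>j. z j + (y j + m j - z j) - y j)"
    proof -
      have "multinom d N p z * (\<Prod>j<d. real (z j choose m j)) * multinom d s p (\<lambda>j. y j + m j - z j)
         = fact N * fact s * (\<Prod>j<d. p j ^ z j / fact (z j) * real (z j choose m j) * (p j ^ (y j + m j - z j) / fact (y j + m j - z j)))"
        unfolding multinom_prod prod.distrib by (simp only: mult_ac)
      also have "\<dots> = fact N * fact s * (\<Prod>j<d. p j ^ y j / fact (y j) * real (y j choose (y j + m j - z j)) * (p j ^ (z j + (y j + m j - z j) - y j) / fact (z j + (y j + m j - z j) - y j)))"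
        using P unfolding P_def
        by (intro arg_cong[where f="\<lambda>x. fact N * fact s * x"] prod.cong refl)
           (subst coord_sym[where m="m j" for j], auto)
      also have "\<dots> = multinom d N p y * (\<Prod>j<d. real (y j choose (y j + m j - z j))) * multinom d s p (\<lambda>j. z j + (y j + m j - z j) - y j)"
        unfolding multinom_prod prod.distrib by (simp only: mult_ac)
      finally show ?thesis .
    qed
    thus "T y z (\<lambda>j. y j + m j - z j) = T z y m" unfolding T_def by (simp add: mult_ac)
  next
    fix m assume m: "m \<in> {m\<in>st {..<d} s. P y z m}"
    have m0: "\<And>j. j \<ge> d \<Longrightarrow> m j = 0" and ms: "(\<Sum>j<d. m j) = s" and P: "P y z m" using m unfolding st_def by auto
    show "(\<lambda>j. y j + (z j + m j - y j) - z j) = m"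
    proof
      fix j show "y j + (z j + m j - y j) - z j = m j" using P z0[of j] y0[of j] m0[of j] unfolding P_def by (cases "j < d") auto
    qed
    have "(\<Sum>j<d. z j + m j - y j) = (\<Sum>j<d. z j + m j) - N" using P ys unfolding P_def by (subst sum_sub_nat) auto
    also have "\<dots> = s" using zs ms by (simp add: sum.distrib)
    finally show "(\<lambda>j. z j + m j - y j) \<in> {m\<in>st {..<d} s. P z y m}"
      using P z0 y0 m0 unfolding st_def P_def by auto
  qed
  thus ?thesis unfolding eK .
qed


lemma sum_indL: "finite A \<Longrightarrow> (\<Sum>y\<in>A. (if z = y then 1 else 0) * (f y::real)) = (if z \<in> A then f z else 0)"
  by (induction A rule: finite_induct) auto

lemma sum_indR: "finite A \<Longrightarrow> (\<Sum>y\<in>A. (f y::real) * (if y = z then 1 else 0)) = (if z \<in> A then f z else 0)"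
  by (induction A rule: finite_induct) auto

context
  fixes d N s i :: nat and p :: "nat \<Rightarrow> real"
  assumes i: "i < d" and psum: "(\<Sum>j<d. p j) = 1" and sN: "s \<le> N"
begin

lemma Kpow_eigen:
  assumes z: "z \<in> st {..<d} N"
  shows "(\<Sum>y\<in>st {..<d} N. ehr_Kpow d N s p l z y * psi N (p i) n (y i)) = beta N s n ^ l * psi N (p i) n (z i)"
proof (induction l)
  case 0
  have "(\<Sum>y\<in>st {..<d} N. ehr_Kpow d N s p 0 z y * psi N (p i) n (y i)) = (\<Sum>y\<in>st {..<d} N. (if z = y then 1 else 0) * psi N (p i) n (y i))"
    by (simp only: ehr_Kpow.simps)
  also have "\<dots> = psi N (p i) n (z i)" using z by (subst sum_indL[OF finite_st[OF finite_lessThan]]) simp_all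
  finally show ?case by simp
next
  case (Suc l)
  have "(\<Sum>y\<in>st {..<d} N. ehr_Kpow d N s p (Suc l) z y * psi N (p i) n (y i))
      = (\<Sum>w\<in>st {..<d} N. ehr_Kpow d N s p l z w * (\<Sum>y\<in>st {..<d} N. ehr_K d N s p w y * psi N (p i) n (y i)))"
  proof -
    have "(\<Sum>y\<in>st {..<d} N. ehr_Kpow d N s p (Suc l) z y * psi N (p i) n (y i))
      = (\<Sum>y\<in>st {..<d} N. \<Sum>w\<in>st {..<d} N. ehr_Kpow d N s p l z w * (ehr_K d N s p w y * psi N (p i) n (y i)))"
      by (simp only: ehr_Kpow.simps ehr_states_st sum_distrib_right mult.assoc)
    also have "\<dots> = (\<Sum>w\<in>st {..<d} N. \<Sum>y\<in>st {..<d} N. ehr_Kpow d N s p l z w * (ehr_K d N s p w y * psi N (p i) n (y i)))"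
      by (rule sum.swap)
    finally show ?thesis by (simp only: sum_distrib_left)
  qed
  also have "\<dots> = (\<Sum>w\<in>st {..<d} N. ehr_Kpow d N s p l z w * (beta N s n * psi N (p i) n (w i)))"
    by (intro sum.cong refl) (simp add: eigen[OF i psum sN])
  also have "\<dots> = beta N s n ^ Suc l * psi N (p i) n (z i)"
    using Suc by (simp add: sum_distrib_left[symmetric] mult_ac)
  finally show ?case .
qed

lemma psi0: "psi N pp 0 u = 1"
  unfolding psi_def by (simp add: coeff_mult coeff_lin_pow)

lemma beta0: "beta N s 0 = 1"
  unfolding beta_def using sN by simp

lemma Kpow_sum:
  assumes z: "z \<in> st {..<d} N"
  shows "(\<Sum>y\<in>st {..<d} N. ehr_Kpow d N s p l z y) = 1"
  using Kpow_eigen[OF z, of l 0] by (simp add: psi0 beta0)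

lemma Kpow_pre:
  assumes x: "x \<in> st {..<d} N" and y: "y \<in> st {..<d} N"
  shows "ehr_Kpow d N s p (Suc l) x y = (\<Sum>z\<in>st {..<d} N. ehr_K d N s p x z * ehr_Kpow d N s p l z y)"
  using y
proof (induction l arbitrary: y)
  case 0
  have "ehr_Kpow d N s p (Suc 0) x y = (\<Sum>z\<in>st {..<d} N. (if x = z then 1 else 0) * ehr_K d N s p z y)"
    by (simp only: ehr_Kpow.simps ehr_states_st)
  also have "\<dots> = ehr_K d N s p x y" using x by (subst sum_indL[OF finite_st[OF finite_lessThan]]) simp_all
  also have "\<dots> = (\<Sum>z\<in>st {..<d} N. ehr_K d N s p x z * (if z = y then 1 else 0))"
    using 0 by (subst sum_indR[OF finite_st[OF finite_lessThan]]) simp_all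
  finally show ?case by (simp only: ehr_Kpow.simps)
next
  case (Suc l)
  have "ehr_Kpow d N s p (Suc (Suc l)) x y = (\<Sum>w\<in>st {..<d} N. ehr_Kpow d N s p (Suc l) x w * ehr_K d N s p w y)"
    by (simp add: ehr_states_st)
  also have "\<dots> = (\<Sum>w\<in>st {..<d} N. (\<Sum>z\<in>st {..<d} N. ehr_K d N s p x z * ehr_Kpow d N s p l z w) * ehr_K d N s p w y)"
    apply (intro sum.cong refl)
    subgoal for w by (subst Suc.IH) simp_all
    done
  also have "\<dots> = (\<Sum>z\<in>st {..<d} N. ehr_K d N s p x z * (\<Sum>w\<in>st {..<d} N. ehr_Kpow d N s p l z w * ehr_K d N s p w y))"
  proof -
    have "(\<Sum>w\<in>st {..<d} N. (\<Sum>z\<in>st {..<d} N. ehr_K d N s p x z * ehr_Kpow d N s p l z w) * ehr_K d N s p w y)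
       = (\<Sum>w\<in>st {..<d} N. \<Sum>z\<in>st {..<d} N. ehr_K d N s p x z * (ehr_Kpow d N s p l z w * ehr_K d N s p w y))"
      by (simp only: sum_distrib_right mult.assoc)
    also have "\<dots> = (\<Sum>z\<in>st {..<d} N. \<Sum>w\<in>st {..<d} N. ehr_K d N s p x z * (ehr_Kpow d N s p l z w * ehr_K d N s p w y))"
      by (rule sum.swap)
    finally show ?thesis by (simp only: sum_distrib_left)
  qed
  also have "\<dots> = (\<Sum>z\<in>st {..<d} N. ehr_K d N s p x z * ehr_Kpow d N s p (Suc l) z y)"
    by (simp add: ehr_states_st)
  finally show ?case .
qed

lemma Kpow_rev:
  assumes x: "x \<in> st {..<d} N" and y: "y \<in> st {..<d} N"
  shows "multinom d N p x * ehr_Kpow d N s p l x y = multinom d N p y * ehr_Kpow d N s p l y x"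
  using x y
proof (induction l arbitrary: x y)
  case 0 thus ?case by auto
next
  case (Suc l)
  have "multinom d N p x * ehr_Kpow d N s p (Suc l) x y =
     (\<Sum>z\<in>st {..<d} N. (multinom d N p x * ehr_Kpow d N s p l x z) * ehr_K d N s p z y)"
    by (simp add: ehr_states_st sum_distrib_left mult.assoc)
  also have "\<dots> = (\<Sum>z\<in>st {..<d} N. ehr_Kpow d N s p l z x * (multinom d N p z * ehr_K d N s p z y))"
    by (intro sum.cong refl) (simp add: Suc.IH[OF Suc.prems(1)] mult_ac)
  also have "\<dots> = (\<Sum>z\<in>st {..<d} N. ehr_Kpow d N s p l z x * (multinom d N p y * ehr_K d N s p y z))"
    by (intro sum.cong refl) (simp add: K_rev Suc.prems)
  also have "\<dots> = multinom d N p y * (\<Sum>z\<in>st {..<d} N. ehr_K d N s p y z * ehr_Kpow d N s p l z x)"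
    by (simp add: sum_distrib_left mult_ac)
  also have "\<dots> = multinom d N p y * ehr_Kpow d N s p (Suc l) y x"
    by (simp only: Kpow_pre[OF Suc.prems(2,1)])
  finally show ?case .
qed

end

lemma poly_sum_N:
  fixes P :: "real poly"
  assumes "degree P \<le> N"
  shows "poly P t = (\<Sum>n\<le>N. coeff P n * t ^ n)"
proof -
  have "poly P t = (\<Sum>n\<le>degree P. coeff P n * t ^ n)" by (rule poly_altdef)
  also have "\<dots> = (\<Sum>n\<le>N. coeff P n * t ^ n)"
    by (rule sum.mono_neutral_left) (use assms in \<open>auto simp: coeff_eq_0\<close>)
  finally show ?thesis .
qed

lemma decomp1:
  fixes pp :: real
  assumes "u \<le> N" "0 < pp"
  shows "pp ^ N * (\<Sum>n\<le>N. (1 / pp) ^ n * psi N pp n u) = (if u = N then 1 else 0)"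
proof -
  define P where "P = [:1, 1 - pp:] ^ u * [:1, -pp:] ^ (N - u)"
  have dg: "degree P \<le> N"
  proof -
    have "degree P \<le> degree ([:1, 1 - pp:] ^ u) + degree ([:1, -pp:] ^ (N - u))"
      unfolding P_def by (rule degree_mult_le)
    also have "\<dots> \<le> 1 * u + 1 * (N - u)"
      by (intro add_mono order.trans[OF degree_power_le] mult_right_mono) auto
    finally show ?thesis using assms by simp
  qed
  have "(\<Sum>n\<le>N. (1 / pp) ^ n * psi N pp n u) = (\<Sum>n\<le>N. coeff P n * (1 / pp) ^ n)"
    unfolding psi_def P_def by (simp only: mult.commute)
  also have "\<dots> = poly P (1 / pp)" by (rule poly_sum_N[OF dg, symmetric])
  also have "\<dots> = (1 + (1 - pp) / pp) ^ u * (1 - pp / pp) ^ (N - u)"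
    unfolding P_def by (simp add: poly_power)
  also have "\<dots> = (1 / pp) ^ u * 0 ^ (N - u)" using assms by (simp add: field_simps)
  finally have e: "(\<Sum>n\<le>N. (1 / pp) ^ n * psi N pp n u) = (1 / pp) ^ u * 0 ^ (N - u)" .
  show ?thesis
  proof (cases "u = N")
    case True thus ?thesis unfolding e using assms by (simp add: power_one_over)
  next
    case False thus ?thesis unfolding e using assms by simp
  qed
qed

lemma psiN: "psi N pp n N = of_nat (N choose n) * (1 - pp) ^ n"
  unfolding psi_def by (simp add: coeff_lin_pow)

context
  fixes d N s i :: nat and p :: "nat \<Rightarrow> real"
  assumes i: "i < d" and psum: "(\<Sum>j<d. p j) = 1" and sN: "s \<le> N" and ppos: "\<forall>j<d. p j > 0"
begin

definition "x0 = (\<lambda>j. if j = i then N else (0::nat))"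

lemma x0_st: "x0 \<in> st {..<d} N"
proof -
  have "(\<Sum>j<d. x0 j) = x0 i" using i unfolding x0_def by (simp add: sum.delta)
  thus ?thesis using i unfolding st_def by (auto simp: x0_def)
qed

lemma pi_pos: "y \<in> st {..<d} N \<Longrightarrow> multinom d N p y > 0"
  unfolding multinom_prod using ppos by (intro mult_pos_pos prod_pos) auto

lemma pi_sum: "(\<Sum>y\<in>st {..<d} N. multinom d N p y) = 1"
  unfolding multinom_def using multinomial_st[of "{..<d}" N p] psum by simp

lemma pi_x0: "multinom d N p x0 = p i ^ N"
proof -
  have "(\<Prod>j<d. p j ^ x0 j / fact (x0 j)) = (\<Prod>j<d. if j = i then p i ^ N / fact N else 1)"
    by (intro prod.cong refl) (auto simp: x0_def)
  also have "\<dots> = p i ^ N / fact N" using i by (simp add: prod.delta')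
  finally show ?thesis unfolding multinom_prod by simp
qed

lemma eq_x0: "w \<in> st {..<d} N \<Longrightarrow> (w = x0) \<longleftrightarrow> w i = N"
proof
  assume w: "w \<in> st {..<d} N" and wi: "w i = N"
  have "(\<Sum>j<d. w j) = w i + (\<Sum>j\<in>{..<d} - {i}. w j)" using i by (simp add: sum.remove)
  hence "(\<Sum>j\<in>{..<d} - {i}. w j) = 0" using w wi unfolding st_def by simp
  hence "\<forall>j\<in>{..<d} - {i}. w j = 0" by simp
  thus "w = x0" using w wi unfolding st_def x0_def by (auto simp: fun_eq_iff)
qed (simp add: x0_def)

lemma Kpow_to_x0:
  assumes y: "y \<in> st {..<d} N"
  shows "ehr_Kpow d N s p l y x0 = p i ^ N * (\<Sum>n\<le>N. (1 / p i) ^ n * beta N s n ^ l * psi N (p i) n (y i))"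
proof -
  have pi: "p i > 0" using ppos i by auto
  have "ehr_Kpow d N s p l y x0 = (\<Sum>w\<in>st {..<d} N. ehr_Kpow d N s p l y w * (if w = x0 then 1 else 0))"
    using x0_st by (subst sum_indR[OF finite_st[OF finite_lessThan]]) simp_all
  also have "\<dots> = (\<Sum>w\<in>st {..<d} N. ehr_Kpow d N s p l y w * (p i ^ N * (\<Sum>n\<le>N. (1 / p i) ^ n * psi N (p i) n (w i))))"
  proof (intro sum.cong refl)
    fix w assume w: "w \<in> st {..<d} N"
    have "w i \<le> (\<Sum>j<d. w j)" using i by (intro member_le_sum) auto
    hence "w i \<le> N" using w unfolding st_def by simp
    thus "ehr_Kpow d N s p l y w * (if w = x0 then 1 else 0) =
          ehr_Kpow d N s p l y w * (p i ^ N * (\<Sum>n\<le>N. (1 / p i) ^ n * psi N (p i) n (w i)))"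
      using decomp1[OF _ pi, of "w i" N] eq_x0[OF w] by simp
  qed
  also have "\<dots> = p i ^ N * (\<Sum>n\<le>N. (1 / p i) ^ n * (\<Sum>w\<in>st {..<d} N. ehr_Kpow d N s p l y w * psi N (p i) n (w i)))"
  proof -
    have "(\<Sum>w\<in>st {..<d} N. ehr_Kpow d N s p l y w * (p i ^ N * (\<Sum>n\<le>N. (1 / p i) ^ n * psi N (p i) n (w i))))
      = p i ^ N * (\<Sum>w\<in>st {..<d} N. \<Sum>n\<le>N. (1 / p i) ^ n * (ehr_Kpow d N s p l y w * psi N (p i) n (w i)))"
      by (simp only: sum_distrib_left mult_ac)
    also have "\<dots> = p i ^ N * (\<Sum>n\<le>N. \<Sum>w\<in>st {..<d} N. (1 / p i) ^ n * (ehr_Kpow d N s p l y w * psi N (p i) n (w i)))"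
      by (subst sum.swap) (rule refl)
    finally show ?thesis by (simp only: sum_distrib_left)
  qed
  also have "\<dots> = p i ^ N * (\<Sum>n\<le>N. (1 / p i) ^ n * beta N s n ^ l * psi N (p i) n (y i))"
    by (simp only: Kpow_eigen[OF i psum sN y] mult.assoc)
  finally show ?thesis .
qed

lemma chi2_formula:
  "ehr_chi2 d N s p x0 l = (\<Sum>n\<le>N. of_nat (N choose n) * ((1 - p i) / p i) ^ n * beta N s n ^ (2 * l)) - 1"
proof -
  have pi: "p i > 0" using ppos i by auto
  let ?S = "st {..<d} N"
  let ?K = "\<lambda>y. ehr_Kpow d N s p l x0 y"
  let ?pi = "multinom d N p"
  have r: "?K y / ?pi y = ehr_Kpow d N s p l y x0 / p i ^ N" if y: "y \<in> ?S" for y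
  proof -
    have "?pi x0 * ?K y = ?pi y * ehr_Kpow d N s p l y x0" by (rule Kpow_rev[OF i psum sN x0_st y])
    thus ?thesis using pi_pos[OF y] pi unfolding pi_x0 by (simp add: field_simps)
  qed
  have "ehr_chi2 d N s p x0 l = (\<Sum>y\<in>?S. ?K y * (?K y / ?pi y) - 2 * ?K y + ?pi y)"
    unfolding ehr_chi2_def ehr_states_st
  proof (intro sum.cong refl)
    fix y assume "y \<in> ?S"
    hence "?pi y > 0" by (rule pi_pos)
    thus "(?K y - ?pi y)\<^sup>2 / ?pi y = ?K y * (?K y / ?pi y) - 2 * ?K y + ?pi y"
      by (simp add: field_simps power2_eq_square)
  qed
  also have "\<dots> = (\<Sum>y\<in>?S. ?K y * (?K y / ?pi y)) - 1"
    using Kpow_sum[OF i psum sN x0_st, of l] pi_sum by (simp add: sum.distrib sum_subtractf sum_distrib_left[symmetric])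
  also have "(\<Sum>y\<in>?S. ?K y * (?K y / ?pi y)) = (\<Sum>y\<in>?S. ?K y * (\<Sum>n\<le>N. (1 / p i) ^ n * beta N s n ^ l * psi N (p i) n (y i)))"
    apply (intro sum.cong refl)
    subgoal for y unfolding r[of y] Kpow_to_x0[of y] using pi by simp
    done
  also have "\<dots> = (\<Sum>n\<le>N. (1 / p i) ^ n * beta N s n ^ l * (\<Sum>y\<in>?S. ?K y * psi N (p i) n (y i)))"
  proof -
    have "(\<Sum>y\<in>?S. ?K y * (\<Sum>n\<le>N. (1 / p i) ^ n * beta N s n ^ l * psi N (p i) n (y i)))
       = (\<Sum>y\<in>?S. \<Sum>n\<le>N. (1 / p i) ^ n * beta N s n ^ l * (?K y * psi N (p i) n (y i)))"
      by (simp only: sum_distrib_left mult_ac)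
    also have "\<dots> = (\<Sum>n\<le>N. \<Sum>y\<in>?S. (1 / p i) ^ n * beta N s n ^ l * (?K y * psi N (p i) n (y i)))"
      by (rule sum.swap)
    finally show ?thesis by (simp only: sum_distrib_left)
  qed
  also have "\<dots> = (\<Sum>n\<le>N. of_nat (N choose n) * ((1 - p i) / p i) ^ n * beta N s n ^ (2 * l))"
    apply (intro sum.cong refl)
    subgoal for n
    proof -
      have e: "(\<Sum>y\<in>?S. ?K y * psi N (p i) n (y i)) = beta N s n ^ l * psi N (p i) n (x0 i)"
        by (rule Kpow_eigen[OF i psum sN x0_st])
      have "x0 i = N" by (simp add: x0_def)
      have bb: "beta N s n ^ (2 * l) = beta N s n ^ l * beta N s n ^ l" by (simp add: mult_2 power_add)
      show ?thesis unfolding e bb \<open>x0 i = N\<close> using pi by (simp add: psiN power_divide field_simps)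
    qed
    done
  finally show ?thesis .
qed

end

lemma beta1: assumes "1 \<le> N" "s \<le> N" shows "beta N s 1 = 1 - real s / real N"
proof -
  have "(N - s) * (N choose s) = N * ((N - 1) choose s)" by (rule binomial_absorb_comp)
  hence "real ((N - s) * (N choose s)) = real (N * ((N - 1) choose s))" by (rule arg_cong)
  hence e: "real (N - s) * real (N choose s) = real N * real ((N - 1) choose s)" by (simp only: of_nat_mult)
  have C: "real (N choose s) > 0" using assms by simp
  have N: "real N > 0" using assms by simp
  have "real ((N - 1) choose s) = real (N - s) * real (N choose s) / real N" using e N by (simp add: field_simps)
  hence "beta N s 1 = real (N - s) / real N" unfolding beta_def using C by simp
  also have "\<dots> = 1 - real s / real N" using assms N by (simp add: of_nat_diff diff_divide_distrib)
  finally show ?thesis .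
qed

lemma beta_step:
  assumes "1 \<le> s" "m \<le> N"
  shows "real ((m - 1) choose s) * real N \<le> real (m choose s) * (real N - real s)"
proof (cases "s \<le> m - 1")
  case False
  have "0 \<le> real (m choose s) * (real N - real s)"
  proof (cases "s \<le> m")
    case True thus ?thesis using assms by simp
  next
    case False thus ?thesis by (simp add: binomial_eq_0)
  qed
  thus ?thesis using False assms by (simp add: binomial_eq_0)
next
  case True
  have "(m - s) * (m choose s) = m * ((m - 1) choose s)" by (rule binomial_absorb_comp)
  hence "real ((m - s) * (m choose s)) = real (m * ((m - 1) choose s))" by (rule arg_cong)
  hence e: "real (m - s) * real (m choose s) = real m * real ((m - 1) choose s)" by (simp only: of_nat_mult)
  have m: "real m > 0" using True assms by simp
  have ms: "real (m - s) = real m - real s" using True by (simp add: of_nat_diff)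
  have k: "real ((m - 1) choose s) = (real m - real s) * real (m choose s) / real m"
    using e ms m by (simp add: field_simps)
  have sm: "real s * real m \<le> real s * real N" using assms by (intro mult_left_mono) auto
  have ineq: "(real m - real s) * real N \<le> (real N - real s) * real m"
    using sm by (simp add: left_diff_distrib right_diff_distrib mult.commute)
  have "real ((m - 1) choose s) * real N = ((real m - real s) * real N) * real (m choose s) / real m"
    unfolding k by (simp add: mult_ac)
  also have "\<dots> \<le> ((real N - real s) * real m) * real (m choose s) / real m"
    by (intro divide_right_mono mult_right_mono ineq) (use m in auto)
  also have "\<dots> = real (m choose s) * (real N - real s)" using m by simp
  finally show ?thesis .
qed
lemma beta_nonneg: "beta N s n \<ge> 0" unfolding beta_def by simp

lemma beta_le:
  assumes "1 \<le> s" "s \<le> N" "1 \<le> N"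
  shows "beta N s n \<le> beta N s 1 ^ n"
proof (induction n)
  case 0 thus ?case using assms by (simp add: beta_def)
next
  case (Suc n)
  have C: "real (N choose s) > 0" using assms by simp
  have Np: "real N > 0" using assms by simp
  have b1: "beta N s 1 = (real N - real s) / real N"
    using beta1[OF assms(3) assms(2)] Np by (simp add: diff_divide_distrib)
  have "beta N s (Suc n) = real (((N - n) - 1) choose s) / real (N choose s)"
  proof -
    have "N - Suc n = (N - n) - 1" by simp
    thus ?thesis unfolding beta_def by (simp only:)
  qed
  also have "\<dots> \<le> (real ((N - n) choose s) * (real N - real s) / real N) / real (N choose s)"
  proof (rule divide_right_mono)
    show "real (((N - n) - 1) choose s) \<le> real ((N - n) choose s) * (real N - real s) / real N"
      using beta_step[OF assms(1), of "N - n" N] Np by (subst pos_le_divide_eq) auto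
  qed (use C in auto)
  also have "\<dots> = beta N s n * beta N s 1"
    unfolding b1 by (simp add: beta_def)
  also have "\<dots> \<le> beta N s 1 ^ n * beta N s 1"
    using Suc beta_nonneg[of N s 1] by (rule mult_right_mono)
  finally show ?case by (simp add: mult.commute)
qed


theorem corollary4p25:
  fixes d N s i :: nat and p :: "nat \<Rightarrow> real" and c :: real
  assumes "d \<ge> 2" and "N \<ge> 2" and "1 \<le> s" and "s \<le> N - 1"
    and "\<forall>j<d. p j > 0" and "(\<Sum>j<d. p j) = 1"
    and "i < d" and "c > 0"
  shows "(\<forall>l::nat. real l \<ge> (ln (real N * (1 - p i) / p i) + c) / (- 2 * ln (1 - real s / real N))
            \<longrightarrow> ehr_chi2 d N s p (\<lambda>j. if j = i then N else 0) l \<le> exp (exp (- c)) - 1)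
       \<and> (\<forall>l::nat. real l \<le> (ln (real N * (1 - p i) / p i) - c) / (- 2 * ln (1 - real s / real N))
            \<longrightarrow> ehr_chi2 d N s p (\<lambda>j. if j = i then N else 0) l \<ge> exp c)"
proof -
  note d2 = assms(1) and N2 = assms(2) and s1 = assms(3) and sN1 = assms(4)
    and ppos = assms(5) and psum = assms(6) and i = assms(7)
  have sN: "s \<le> N" using sN1 by simp
  have sltN: "s < N" using sN1 N2 by simp
  define pp where "pp = p i"
  have pp0: "0 < pp" using ppos i unfolding pp_def by auto
  have pp1: "pp < 1"
  proof -
    define j where "j = (if i = 0 then 1 else 0::nat)"
    have j: "j < d" "j \<noteq> i" using d2 unfolding j_def by auto
    have "(\<Sum>j<d. p j) = p i + (\<Sum>j\<in>{..<d} - {i}. p j)" using i by (simp add: sum.remove)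
    moreover have "p j \<le> (\<Sum>j\<in>{..<d} - {i}. p j)"
      using j ppos by (intro member_le_sum) auto
    moreover have "p j > 0" using j ppos by auto
    ultimately show ?thesis using psum unfolding pp_def by linarith
  qed
  define r where "r = (1 - pp) / pp"
  have r0: "r > 0" using pp0 pp1 unfolding r_def by simp
  define b where "b = 1 - real s / real N"
  have Npos: "real N > 0" using N2 by simp
  have b0: "b > 0" using sltN Npos unfolding b_def by (simp add: field_simps)
  have b1: "b < 1" using s1 Npos unfolding b_def by simp
  have bb: "beta N s 1 = b" unfolding b_def using beta1[of N s] N2 sN by simp
  define L where "L = - 2 * ln b"
  have L0: "L > 0" using b0 b1 unfolding L_def by simp
  define A where "A l = (\<Sum>n\<le>N. of_nat (N choose n) * r ^ n * beta N s n ^ (2 * l))" for l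
  have chi: "ehr_chi2 d N s p (\<lambda>j. if j = i then N else 0) l = A l - 1" for l
    using chi2_formula[OF i psum sN ppos, of l] unfolding A_def r_def pp_def by (simp add: x0_def[OF i psum sN ppos])
  have T: "b ^ (2 * l) = exp (- (real l * L))" for l
  proof -
    have "b ^ (2 * l) = exp (ln (b ^ (2 * l)))" using b0 by simp
    also have "\<dots> = exp (real (2 * l) * ln b)" using b0 by (simp add: ln_realpow)
    finally show ?thesis unfolding L_def by simp
  qed
  have Nr: "real N * r * b ^ (2 * l) = exp (ln (real N * r) - real l * L)" for l
    unfolding T using Npos r0 by (simp add: exp_diff exp_minus field_simps)
  have upper: "A l \<le> exp (real N * r * b ^ (2 * l))" for l
  proof -
    have "A l \<le> (\<Sum>n\<le>N. of_nat (N choose n) * (r * b ^ (2 * l)) ^ n * 1 ^ (N - n))"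
      unfolding A_def
    proof (rule sum_mono)
      fix n assume "n \<in> {..N}"
      have "beta N s n ^ (2 * l) \<le> (b ^ n) ^ (2 * l)"
        using beta_le[of s N n] s1 sN N2 bb beta_nonneg[of N s n] by (intro power_mono) auto
      hence "r ^ n * beta N s n ^ (2 * l) \<le> r ^ n * (b ^ n) ^ (2 * l)"
        using r0 by (intro mult_left_mono) auto
      thus "of_nat (N choose n) * r ^ n * beta N s n ^ (2 * l) \<le> of_nat (N choose n) * (r * b ^ (2 * l)) ^ n * 1 ^ (N - n)"
      proof -
        have e: "(r * b ^ (2 * l)) ^ n * 1 ^ (N - n) = r ^ n * (b ^ n) ^ (2 * l)"
          by (simp add: power_mult_distrib power_mult[symmetric] mult.commute)
        show ?thesis unfolding e mult.assoc
          by (rule mult_left_mono) (use \<open>r ^ n * beta N s n ^ (2 * l) \<le> r ^ n * (b ^ n) ^ (2 * l)\<close> in auto)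
      qed
    qed
    also have "\<dots> = (r * b ^ (2 * l) + 1) ^ N" by (rule binomial_ring[symmetric])
    also have "\<dots> \<le> exp (r * b ^ (2 * l)) ^ N"
      using r0 b0 by (intro power_mono) (simp_all add: add.commute)
    also have "\<dots> = exp (real N * r * b ^ (2 * l))" by (simp add: exp_of_nat_mult[symmetric] mult.assoc)
    finally show ?thesis .
  qed
  have lower: "A l \<ge> 1 + real N * r * b ^ (2 * l)" for l
  proof -
    have "(\<Sum>n\<in>{0,1}. of_nat (N choose n) * r ^ n * beta N s n ^ (2 * l)) \<le> A l"
      unfolding A_def using N2 r0 by (intro sum_mono2) (auto intro!: mult_nonneg_nonneg beta_nonneg)
    moreover have "(\<Sum>n\<in>{0,1}. of_nat (N choose n) * r ^ n * beta N s n ^ (2 * l)) = 1 + real N * r * b ^ (2 * l)"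
      using bb by (simp add: beta0[OF i psum sN])
    ultimately show ?thesis by simp
  qed
  have lnarg: "real N * (1 - p i) / p i = real N * r" unfolding r_def pp_def by simp
  show ?thesis
  proof (intro conjI allI impI)
    fix l :: nat
    assume "(ln (real N * (1 - p i) / p i) + c) / (- 2 * ln (1 - real s / real N)) \<le> real l"
    hence "(ln (real N * r) + c) / L \<le> real l" unfolding lnarg L_def b_def .
    hence "ln (real N * r) + c \<le> real l * L" using L0 by (simp add: pos_divide_le_eq)
    hence "real N * r * b ^ (2 * l) \<le> exp (- c)" unfolding Nr by simp
    hence "exp (real N * r * b ^ (2 * l)) \<le> exp (exp (- c))" by simp
    thus "ehr_chi2 d N s p (\<lambda>j. if j = i then N else 0) l \<le> exp (exp (- c)) - 1"
      unfolding chi using upper[of l] by linarith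
  next
    fix l :: nat
    assume "real l \<le> (ln (real N * (1 - p i) / p i) - c) / (- 2 * ln (1 - real s / real N))"
    hence "real l \<le> (ln (real N * r) - c) / L" unfolding lnarg L_def b_def .
    hence "real l * L \<le> ln (real N * r) - c" using L0 by (simp add: pos_le_divide_eq)
    hence "exp c \<le> real N * r * b ^ (2 * l)" unfolding Nr by simp
    thus "exp c \<le> ehr_chi2 d N s p (\<lambda>j. if j = i then N else 0) l"
      unfolding chi using lower[of l] by linarith
  qed
qed

end
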